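(* Let $z\ge1$, $X\subset[\Delta]^d$ finite, $x\in X$ and $p\in X$ fixed, and $r=\|x-p\|_2$. Let $Q\subseteq X$ be a set of at most $k$ centers containing $p$ that is a constant-factor approximation to the optimal $(k,z)$-medoids clustering on $X$ among sets containing a center at $p$, and let $\Psi$ be a constant-factor approximation to $\mathrm{Cost}(X,Q)$. Let $S$ be an optimal $(k,z)$-medoids clustering on $X$ among sets containing a center at $p$ and no center in the interior of the ball $B_r(x)$. Let $n_b$ be the number of points of $X$ assigned (by $Q$, i.e., to their closest center in $Q$) to centers of $Q$ lying in $B_{r/2}(x)$. Then there exists a constant $\gamma\ge1$ such that \[\Psi+n_b\cdot r^z\le\gamma\cdot\mathrm{Cost}(X,S).\]
   Context: $\mathrm{Cost}(X,C)=\sum_{y\in X}\min_{c\in C}\|y-c\|_2^z$. A $(k,z)$-medoids clustering is a set of at most $k$ centers chosen from $X$. $B_\rho(x)$ denotes the Euclidean ball of radius $\rho$ centered at $x$. "Constant-factor approximation" means within a multiplicative constant factor; the constant $\gamma$ may depend on these constants and on $z$. *)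

theory Defs
  imports Complex_Main
begin

type_synonym point = "nat \<Rightarrow> real"

text \<open>The grid [Delta]^d = {1,...,Delta}^d; a point is a function nat => real that
  vanishes outside the coordinates 0..d-1.\<close>
definition grid :: "nat \<Rightarrow> nat \<Rightarrow> point set" where
  "grid Delta d = {y. (\<forall>i<d. y i \<in> \<int> \<and> 1 \<le> y i \<and> y i \<le> real Delta) \<and> (\<forall>i\<ge>d. y i = 0)}"

definition edist :: "nat \<Rightarrow> point \<Rightarrow> point \<Rightarrow> real" where
  "edist d y c = sqrt (\<Sum>i<d. (y i - c i)\<^sup>2)"

definition cost :: "nat \<Rightarrow> real \<Rightarrow> point set \<Rightarrow> point set \<Rightarrow> real" where
  "cost d z X C = (\<Sum>y\<in>X. Min ((\<lambda>c. edist d y c powr z) ` C))"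

definition medoids_with :: "nat \<Rightarrow> point set \<Rightarrow> point \<Rightarrow> point set set" where
  "medoids_with k X p = {C. C \<subseteq> X \<and> card C \<le> k \<and> p \<in> C}"

end

theory Submission
  imports Defs "HOL-Analysis.Analysis"
begin

lemma edist_L2: "edist d y c = L2_set (\<lambda>i. y i - c i) {..<d}"
  by (simp add: edist_def L2_set_def)

lemma edist_tri: "edist d a c \<le> edist d a b + edist d b c"
proof -
  have "edist d a c = L2_set (\<lambda>i. (a i - b i) + (b i - c i)) {..<d}"
    by (simp add: edist_L2)
  also have "\<dots> \<le> L2_set (\<lambda>i. a i - b i) {..<d} + L2_set (\<lambda>i. b i - c i) {..<d}"
    by (rule L2_set_triangle_ineq)
  finally show ?thesis by (simp add: edist_L2)
qed

lemma edist_sym: "edist d a b = edist d b a"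
  unfolding edist_def by (simp add: power2_commute)

lemma edist_nonneg: "edist d a b \<ge> 0"
  unfolding edist_def by (simp add: sum_nonneg)

lemma pw_bound:
  fixes a b r z :: real
  assumes "a \<ge> 0" "b \<ge> 0" "r \<ge> 0" "r \<le> 2 * (a + b)" "z \<ge> 1"
  shows "r powr z \<le> 4 powr z * (a powr z + b powr z)"
proof -
  have "a \<le> max a b" "b \<le> max a b" by auto
  hence "r \<le> 4 * max a b" using assms by argo
  hence "r powr z \<le> (4 * max a b) powr z" using assms by (intro powr_mono2) auto
  also have "\<dots> = 4 powr z * max a b powr z" using assms by (simp add: powr_mult)
  also have "max a b powr z \<le> a powr z + b powr z"
    by (cases "a \<le> b") (auto simp: max_def)
  hence "4 powr z * max a b powr z \<le> 4 powr z * (a powr z + b powr z)" by simp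
  finally show ?thesis .
qed

lemma min_attained:
  assumes "finite C" "C \<noteq> {}"
  obtains c where "c \<in> C" "Min ((\<lambda>c. edist d y c powr z) ` C) = edist d y c powr z"
proof -
  have "Min ((\<lambda>c. edist d y c powr z) ` C) \<in> (\<lambda>c. edist d y c powr z) ` C"
    using assms by (intro Min_in) auto
  thus ?thesis using that by blast
qed

lemma min_le:
  assumes "finite C" "c \<in> C"
  shows "Min ((\<lambda>c. edist d y c powr z) ` C) \<le> edist d y c powr z"
  using assms by (intro Min_le) auto

lemma min_nonneg:
  assumes "finite C" "C \<noteq> {}"
  shows "Min ((\<lambda>c. edist d y c powr z) ` C) \<ge> 0"
  using min_attained[OF assms, of d y z] by (metis powr_ge_zero)

theorem lemma3p8:
  fixes z alpha beta :: real
  assumes "z \<ge> 1" and "alpha \<ge> 1" and "beta \<ge> 1"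
  shows "\<exists>gamma\<ge>1. \<forall>(Delta::nat) (d::nat) (k::nat) (X::point set) (x::point) (p::point)
            (Q::point set) (Psi::real) (S::point set) (\<sigma>::point \<Rightarrow> point).
     finite X \<longrightarrow> X \<subseteq> grid Delta d \<longrightarrow> x \<in> X \<longrightarrow> p \<in> X \<longrightarrow>
     Q \<in> medoids_with k X p \<longrightarrow>
     (\<forall>C\<in>medoids_with k X p. cost d z X Q \<le> alpha * cost d z X C) \<longrightarrow>
     cost d z X Q \<le> Psi \<longrightarrow> Psi \<le> beta * cost d z X Q \<longrightarrow>
     S \<in> medoids_with k X p \<longrightarrow> (\<forall>c\<in>S. \<not> edist d c x < edist d x p) \<longrightarrow>
     (\<forall>C\<in>medoids_with k X p. (\<forall>c\<in>C. \<not> edist d c x < edist d x p) \<longrightarrow>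
         cost d z X S \<le> cost d z X C) \<longrightarrow>
     (\<forall>y\<in>X. \<sigma> y \<in> Q \<and> (\<forall>c\<in>Q. edist d y (\<sigma> y) \<le> edist d y c)) \<longrightarrow>
     Psi + real (card {y\<in>X. edist d (\<sigma> y) x \<le> edist d x p / 2}) * (edist d x p) powr z
       \<le> gamma * cost d z X S"
proof (intro exI[of _ "alpha * beta + 4 powr z * (1 + alpha)"] conjI allI impI)
  show "1 \<le> alpha * beta + 4 powr z * (1 + alpha)"
  proof -
    have "1 * 1 \<le> alpha * beta" using assms by (intro mult_mono) auto
    moreover have "0 \<le> 4 powr z * (1 + alpha)" using assms by simp
    ultimately show ?thesis by linarith
  qed
next
  fix Delta d k X x p Q Psi S \<sigma>
  assume fin: "finite X" and "X \<subseteq> grid Delta d" and "x \<in> X" "p \<in> X"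
    and Qm: "Q \<in> medoids_with k X p"
    and Qapx: "\<forall>C\<in>medoids_with k X p. cost d z X Q \<le> alpha * cost d z X C"
    and P1: "cost d z X Q \<le> Psi" and P2: "Psi \<le> beta * cost d z X Q"
    and Sm: "S \<in> medoids_with k X p" and Sfar: "\<forall>c\<in>S. \<not> edist d c x < edist d x p"
    and "\<forall>C\<in>medoids_with k X p. (\<forall>c\<in>C. \<not> edist d c x < edist d x p) \<longrightarrow>
         cost d z X S \<le> cost d z X C"
    and sig: "\<forall>y\<in>X. \<sigma> y \<in> Q \<and> (\<forall>c\<in>Q. edist d y (\<sigma> y) \<le> edist d y c)"
  define r where "r = edist d x p"
  define B where "B = {y\<in>X. edist d (\<sigma> y) x \<le> r / 2}"
  define mS where "mS = (\<lambda>y. Min ((\<lambda>c. edist d y c powr z) ` S))"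
  define mQ where "mQ = (\<lambda>y. Min ((\<lambda>c. edist d y c powr z) ` Q))"
  have finS: "finite S" "S \<noteq> {}" using Sm fin unfolding medoids_with_def
    by (auto intro: finite_subset)
  have finQ: "finite Q" "Q \<noteq> {}" using Qm fin unfolding medoids_with_def
    by (auto intro: finite_subset)
  have cS: "cost d z X S = sum mS X" by (simp add: cost_def mS_def)
  have cQ: "cost d z X Q = sum mQ X" by (simp add: cost_def mQ_def)
  have mSn: "mS y \<ge> 0" for y unfolding mS_def using min_nonneg[OF finS] .
  have mQn: "mQ y \<ge> 0" for y unfolding mQ_def using min_nonneg[OF finQ] .
  have r0: "r \<ge> 0" unfolding r_def by (rule edist_nonneg)
  have pt: "r powr z \<le> 4 powr z * (mS y + mQ y)" if "y \<in> B" for y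
  proof -
    have yX: "y \<in> X" and v: "edist d (\<sigma> y) x \<le> r / 2" using that B_def by auto
    obtain s where s: "s \<in> S" "mS y = edist d y s powr z"
      using min_attained[OF finS, of d y z] unfolding mS_def by blast
    obtain c where c: "c \<in> Q" "mQ y = edist d y c powr z"
      using min_attained[OF finQ, of d y z] unfolding mQ_def by blast
    have sx: "r \<le> edist d s x" using Sfar s(1) r_def by force
    have "edist d s x \<le> edist d s y + edist d y x" by (rule edist_tri)
    moreover have "edist d y x \<le> edist d y (\<sigma> y) + edist d (\<sigma> y) x" by (rule edist_tri)
    moreover have "edist d s y = edist d y s" by (rule edist_sym)
    ultimately have "r \<le> 2 * (edist d y s + edist d y (\<sigma> y))" using sx v by argo
    hence "r powr z \<le> 4 powr z * (edist d y s powr z + edist d y (\<sigma> y) powr z)"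
      using assms(1) r0 by (intro pw_bound) (auto simp: edist_nonneg)
    moreover have "edist d y (\<sigma> y) powr z \<le> mQ y"
      unfolding c(2) using sig yX c(1) assms(1)
      by (intro powr_mono2) (auto simp: edist_nonneg)
    ultimately have "r powr z \<le> 4 powr z * (mS y + edist d y (\<sigma> y) powr z)" using s(2) by simp
    also have "\<dots> \<le> 4 powr z * (mS y + mQ y)"
      using \<open>edist d y (\<sigma> y) powr z \<le> mQ y\<close> by (intro mult_left_mono) auto
    finally show ?thesis .
  qed
  have "real (card B) * r powr z = (\<Sum>y\<in>B. r powr z)" by simp
  also have "\<dots> \<le> (\<Sum>y\<in>B. 4 powr z * (mS y + mQ y))" by (intro sum_mono pt)
  also have "\<dots> \<le> (\<Sum>y\<in>X. 4 powr z * (mS y + mQ y))"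
    using fin mSn mQn by (intro sum_mono2) (auto simp: B_def)
  also have "\<dots> = 4 powr z * (cost d z X S + cost d z X Q)"
    by (simp add: cS cQ sum_distrib_left[symmetric] sum.distrib)
  finally have nb: "real (card B) * r powr z \<le> 4 powr z * (cost d z X S + cost d z X Q)" .
  have qa: "cost d z X Q \<le> alpha * cost d z X S" using Qapx Sm by blast
  have cS0: "cost d z X S \<ge> 0" unfolding cS using mSn by (simp add: sum_nonneg)
  have "Psi \<le> beta * (alpha * cost d z X S)"
  proof -
    have "beta * cost d z X Q \<le> beta * (alpha * cost d z X S)"
      using qa assms(3) by (intro mult_left_mono) auto
    thus ?thesis using P2 by linarith
  qed
  moreover have "4 powr z * (cost d z X S + cost d z X Q) \<le> 4 powr z * ((1 + alpha) * cost d z X S)"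
    using qa by (intro mult_left_mono) (auto simp: algebra_simps)
  moreover have "(alpha * beta + 4 powr z * (1 + alpha)) * cost d z X S
     = beta * (alpha * cost d z X S) + 4 powr z * ((1 + alpha) * cost d z X S)"
    by (simp add: algebra_simps)
  ultimately have "Psi + real (card B) * r powr z
       \<le> (alpha * beta + 4 powr z * (1 + alpha)) * cost d z X S"
    using nb by argo
  thus "Psi + real (card {y\<in>X. edist d (\<sigma> y) x \<le> edist d x p / 2}) * (edist d x p) powr z
       \<le> (alpha * beta + 4 powr z * (1 + alpha)) * cost d z X S"
    unfolding B_def r_def .
qed

end
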